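(* In a Markov category $\mathcal C$, for all $p\colon A\to X$ and $f,g\colon X\to Y$: if $f$ and $g$ are $p$-dilationally equal, then $f$ and $g$ are $p$-almost surely equal. The converse implication holds for all such $p,f,g$ if and only if $\mathcal C$ is causal.
   Context: A Markov category is a symmetric monoidal category $(\mathcal C,\otimes,I)$ with commutative comonoids $\mathrm{copy}_X\colon X\to X\otimes X$, $\mathrm{del}_X\colon X\to I$ compatible with $\otimes$, with $I$ terminal. A dilation of $p\colon A\to X$ is a morphism $\pi\colon A\to X\otimes E$ with $(\mathrm{id}_X\otimes\mathrm{del}_E)\circ\pi=p$. For $p\colon A\to X$ and $f,g\colon X\to Y$: $f,g$ are $p$-dilationally equal if for every dilation $\pi\colon A\to X\otimes E$ of $p$, $(f\otimes\mathrm{id}_E)\circ\pi=(g\otimes\mathrm{id}_E)\circ\pi$; they are $p$-almost surely equal if $(\mathrm{id}_X\otimes f)\circ\mathrm{copy}_X\circ p=(\mathrm{id}_X\otimes g)\circ\mathrm{copy}_X\circ p$. $\mathcal C$ is causal if for all $f\colon A\to W$, $g\colon W\to X$, $h_1,h_2\colon X\to Y$ with $(\mathrm{id}_X\otimes h_1)\circ\mathrm{copy}_X\circ g\circ f=(\mathrm{id}_X\otimes h_2)\circ\mathrm{copy}_X\circ g\circ f$, also $\big(\mathrm{id}_W\otimes((\mathrm{id}_X\otimes h_1)\circ\mathrm{copy}_X\circ g)\big)\circ\mathrm{copy}_W\circ f=\big(\mathrm{id}_W\otimes((\mathrm{id}_X\otimes h_2)\circ\mathrm{copy}_X\circ g)\big)\circ\mathrm{copy}_W\circ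 f$. *)

theory Defs
  imports Main
begin

text \<open>Objects are the
elements of type 'o, morphisms the elements of type 'm; composition is
mcomp C g f = g after f (only meaningful when cod f = dom g).\<close>

record ('o, 'm) mcat =
  mdom :: "'m \<Rightarrow> 'o"
  mcod :: "'m \<Rightarrow> 'o"
  mid :: "'o \<Rightarrow> 'm"
  mcomp :: "'m \<Rightarrow> 'm \<Rightarrow> 'm"
  otens :: "'o \<Rightarrow> 'o \<Rightarrow> 'o"
  mtens :: "'m \<Rightarrow> 'm \<Rightarrow> 'm"
  unit_obj :: "'o"
  assoc :: "'o \<Rightarrow> 'o \<Rightarrow> 'o \<Rightarrow> 'm"
  lunit :: "'o \<Rightarrow> 'm"
  runit :: "'o \<Rightarrow> 'm"
  braid :: "'o \<Rightarrow> 'o \<Rightarrow> 'm"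
  mcopy :: "'o \<Rightarrow> 'm"
  mdel :: "'o \<Rightarrow> 'm"

definition hom :: "('o, 'm, 'z) mcat_scheme \<Rightarrow> 'o \<Rightarrow> 'o \<Rightarrow> 'm set" where
  "hom C A B = {f. mdom C f = A \<and> mcod C f = B}"

definition is_category :: "('o, 'm, 'z) mcat_scheme \<Rightarrow> bool" where
  "is_category C \<longleftrightarrow>
     (\<forall>A. mid C A \<in> hom C A A) \<and>
     (\<forall>f g. mcod C f = mdom C g \<longrightarrow> mcomp C g f \<in> hom C (mdom C f) (mcod C g)) \<and>
     (\<forall>f. mcomp C f (mid C (mdom C f)) = f \<and> mcomp C (mid C (mcod C f)) f = f) \<and>
     (\<forall>f g h. mcod C f = mdom C g \<and> mcod C g = mdom C h \<longrightarrow>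
        mcomp C h (mcomp C g f) = mcomp C (mcomp C h g) f)"

definition is_iso :: "('o, 'm, 'z) mcat_scheme \<Rightarrow> 'm \<Rightarrow> bool" where
  "is_iso C f \<longleftrightarrow> (\<exists>g. g \<in> hom C (mcod C f) (mdom C f) \<and>
      mcomp C g f = mid C (mdom C f) \<and> mcomp C f g = mid C (mcod C f))"

definition inv_arr :: "('o, 'm, 'z) mcat_scheme \<Rightarrow> 'm \<Rightarrow> 'm" where
  "inv_arr C f = (SOME g. g \<in> hom C (mcod C f) (mdom C f) \<and>
      mcomp C g f = mid C (mdom C f) \<and> mcomp C f g = mid C (mcod C f))"

definition is_symmetric_monoidal :: "('o, 'm, 'z) mcat_scheme \<Rightarrow> bool" where
  "is_symmetric_monoidal C \<longleftrightarrow> is_category C \<and>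
     \<comment> \<open>tensor is a bifunctor\<close>
     (\<forall>f g. mtens C f g \<in> hom C (otens C (mdom C f) (mdom C g)) (otens C (mcod C f) (mcod C g))) \<and>
     (\<forall>A B. mtens C (mid C A) (mid C B) = mid C (otens C A B)) \<and>
     (\<forall>f g f' g'. mcod C f = mdom C g \<and> mcod C f' = mdom C g' \<longrightarrow>
        mtens C (mcomp C g f) (mcomp C g' f') = mcomp C (mtens C g g') (mtens C f f')) \<and>
     \<comment> \<open>associator, unitors, braiding: typing and invertibility\<close>
     (\<forall>A B D. assoc C A B D \<in> hom C (otens C (otens C A B) D) (otens C A (otens C B D))
              \<and> is_iso C (assoc C A B D)) \<and>
     (\<forall>A. lunit C A \<in> hom C (otens C (unit_obj C) A) A \<and> is_iso C (lunit C A)) \<and>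
     (\<forall>A. runit C A \<in> hom C (otens C A (unit_obj C)) A \<and> is_iso C (runit C A)) \<and>
     (\<forall>A B. braid C A B \<in> hom C (otens C A B) (otens C B A)) \<and>
     \<comment> \<open>naturality\<close>
     (\<forall>f1 f2 f3. mcomp C (assoc C (mcod C f1) (mcod C f2) (mcod C f3)) (mtens C (mtens C f1 f2) f3)
        = mcomp C (mtens C f1 (mtens C f2 f3)) (assoc C (mdom C f1) (mdom C f2) (mdom C f3))) \<and>
     (\<forall>f. mcomp C (lunit C (mcod C f)) (mtens C (mid C (unit_obj C)) f) = mcomp C f (lunit C (mdom C f))) \<and>
     (\<forall>f. mcomp C (runit C (mcod C f)) (mtens C f (mid C (unit_obj C))) = mcomp C f (runit C (mdom C f))) \<and>
     (\<forall>f g. mcomp C (braid C (mcod C f) (mcod C g)) (mtens C f g)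
        = mcomp C (mtens C g f) (braid C (mdom C f) (mdom C g))) \<and>
     \<comment> \<open>pentagon and triangle\<close>
     (\<forall>A B D E. mcomp C (mtens C (mid C A) (assoc C B D E))
                   (mcomp C (assoc C A (otens C B D) E) (mtens C (assoc C A B D) (mid C E)))
        = mcomp C (assoc C A B (otens C D E)) (assoc C (otens C A B) D E)) \<and>
     (\<forall>A B. mcomp C (mtens C (mid C A) (lunit C B)) (assoc C A (unit_obj C) B)
        = mtens C (runit C A) (mid C B)) \<and>
     \<comment> \<open>symmetry and hexagon\<close>
     (\<forall>A B. mcomp C (braid C B A) (braid C A B) = mid C (otens C A B)) \<and>
     (\<forall>A B D. mcomp C (assoc C B D A) (mcomp C (braid C A (otens C B D)) (assoc C A B D))
        = mcomp C (mtens C (mid C B) (braid C A D))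
            (mcomp C (assoc C B A D) (mtens C (braid C A B) (mid C D))))"

definition is_markov_category :: "('o, 'm, 'z) mcat_scheme \<Rightarrow> bool" where
  "is_markov_category C \<longleftrightarrow> is_symmetric_monoidal C \<and>
     (\<forall>A. mcopy C A \<in> hom C A (otens C A A) \<and> mdel C A \<in> hom C A (unit_obj C)) \<and>
     \<comment> \<open>coassociativity\<close>
     (\<forall>A. mcomp C (assoc C A A A) (mcomp C (mtens C (mcopy C A) (mid C A)) (mcopy C A))
        = mcomp C (mtens C (mid C A) (mcopy C A)) (mcopy C A)) \<and>
     \<comment> \<open>counitality\<close>
     (\<forall>A. mcomp C (lunit C A) (mcomp C (mtens C (mdel C A) (mid C A)) (mcopy C A)) = mid C A) \<and>
     (\<forall>A. mcomp C (runit C A) (mcomp C (mtens C (mid C A) (mdel C A)) (mcopy C A)) = mid C A) \<and>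
     \<comment> \<open>commutativity\<close>
     (\<forall>A. mcomp C (braid C A A) (mcopy C A) = mcopy C A) \<and>
     \<comment> \<open>compatibility with the monoidal structure\<close>
     (\<forall>A B. mcopy C (otens C A B) =
        mcomp C (inv_arr C (assoc C A B (otens C A B)))
         (mcomp C (mtens C (mid C A) (assoc C B A B))
          (mcomp C (mtens C (mid C A) (mtens C (braid C A B) (mid C B)))
           (mcomp C (mtens C (mid C A) (inv_arr C (assoc C A B B)))
            (mcomp C (assoc C A A (otens C B B))
             (mtens C (mcopy C A) (mcopy C B))))))) \<and>
     (\<forall>A B. mdel C (otens C A B) = mcomp C (lunit C (unit_obj C)) (mtens C (mdel C A) (mdel C B))) \<and>
     mcopy C (unit_obj C) = inv_arr C (lunit C (unit_obj C)) \<and>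
     mdel C (unit_obj C) = mid C (unit_obj C) \<and>
     \<comment> \<open>the unit is terminal\<close>
     (\<forall>A f. f \<in> hom C A (unit_obj C) \<longrightarrow> f = mdel C A)"

definition dilation :: "('o, 'm, 'z) mcat_scheme \<Rightarrow> 'm \<Rightarrow> 'o \<Rightarrow> 'm \<Rightarrow> bool" where
  "dilation C p E pi \<longleftrightarrow> pi \<in> hom C (mdom C p) (otens C (mcod C p) E) \<and>
     mcomp C (runit C (mcod C p)) (mcomp C (mtens C (mid C (mcod C p)) (mdel C E)) pi) = p"

definition dil_eq :: "('o, 'm, 'z) mcat_scheme \<Rightarrow> 'm \<Rightarrow> 'm \<Rightarrow> 'm \<Rightarrow> bool" where
  "dil_eq C p f g \<longleftrightarrow> (\<forall>E pi. dilation C p E pi \<longrightarrow>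
     mcomp C (mtens C f (mid C E)) pi = mcomp C (mtens C g (mid C E)) pi)"

definition as_eq :: "('o, 'm, 'z) mcat_scheme \<Rightarrow> 'm \<Rightarrow> 'm \<Rightarrow> 'm \<Rightarrow> bool" where
  "as_eq C p f g \<longleftrightarrow>
     mcomp C (mtens C (mid C (mcod C p)) f) (mcomp C (mcopy C (mcod C p)) p)
   = mcomp C (mtens C (mid C (mcod C p)) g) (mcomp C (mcopy C (mcod C p)) p)"

definition causal :: "('o, 'm, 'z) mcat_scheme \<Rightarrow> bool" where
  "causal C \<longleftrightarrow> (\<forall>A W X Y f g h1 h2.
     f \<in> hom C A W \<and> g \<in> hom C W X \<and> h1 \<in> hom C X Y \<and> h2 \<in> hom C X Y \<and>
     mcomp C (mtens C (mid C X) h1) (mcomp C (mcopy C X) (mcomp C g f))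
       = mcomp C (mtens C (mid C X) h2) (mcomp C (mcopy C X) (mcomp C g f))
     \<longrightarrow>
     mcomp C (mtens C (mid C W) (mcomp C (mtens C (mid C X) h1) (mcomp C (mcopy C X) g)))
        (mcomp C (mcopy C W) f)
       = mcomp C (mtens C (mid C W) (mcomp C (mtens C (mid C X) h2) (mcomp C (mcopy C X) g)))
        (mcomp C (mcopy C W) f))"

end

theory Submission
  imports Defs
begin


locale MC =
  fixes C :: "('o, 'm) mcat"
  assumes mk: "is_markov_category C"
begin

abbreviation cmp (infixr "\<cdot>" 55) where "g \<cdot> f \<equiv> mcomp C g f"
abbreviation tn (infixr "\<odot>" 60) where "f \<odot> g \<equiv> mtens C f g"
abbreviation ot (infixr "\<oplus>" 65) where "A \<oplus> B \<equiv> otens C A B"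
abbreviation "I \<equiv> unit_obj C"
abbreviation "dm \<equiv> mdom C"
abbreviation "cd \<equiv> mcod C"
abbreviation "ii \<equiv> mid C"

lemma sm: "is_symmetric_monoidal C" using mk unfolding is_markov_category_def by metis
lemma cat: "is_category C" using sm unfolding is_symmetric_monoidal_def by metis

lemma dom_id[simp]: "dm (ii A) = A" and cod_id[simp]: "cd (ii A) = A"
  using cat unfolding is_category_def hom_def by auto

lemma dom_comp[simp]: "cd f = dm g \<Longrightarrow> dm (g \<cdot> f) = dm f"
  and cod_comp[simp]: "cd f = dm g \<Longrightarrow> cd (g \<cdot> f) = cd g"
  using cat unfolding is_category_def hom_def by auto

lemma id_r[simp]: "dm f = A \<Longrightarrow> f \<cdot> ii A = f"
  and id_l[simp]: "cd f = A \<Longrightarrow> ii A \<cdot> f = f"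
  using cat unfolding is_category_def by auto

lemma assoc_r[simp]: "cd f = dm g \<Longrightarrow> cd g = dm h \<Longrightarrow> (h \<cdot> g) \<cdot> f = h \<cdot> (g \<cdot> f)"
  using cat unfolding is_category_def by metis

lemma dom_tens[simp]: "dm (f \<odot> g) = dm f \<oplus> dm g"
  and cod_tens[simp]: "cd (f \<odot> g) = cd f \<oplus> cd g"
  using sm unfolding is_symmetric_monoidal_def hom_def by auto

lemma tens_id[simp]: "ii A \<odot> ii B = ii (A \<oplus> B)"
  using sm unfolding is_symmetric_monoidal_def by metis

lemma interchange: "cd f = dm g \<Longrightarrow> cd f' = dm g' \<Longrightarrow> (g \<cdot> f) \<odot> (g' \<cdot> f') = (g \<odot> g') \<cdot> (f \<odot> f')"
  using sm unfolding is_symmetric_monoidal_def by metis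

lemma dom_assoc[simp]: "dm (assoc C A B D) = (A \<oplus> B) \<oplus> D"
  and cod_assoc[simp]: "cd (assoc C A B D) = A \<oplus> (B \<oplus> D)"
  and iso_assoc: "is_iso C (assoc C A B D)"
  using sm unfolding is_symmetric_monoidal_def hom_def by auto

lemma dom_lunit[simp]: "dm (lunit C A) = I \<oplus> A"
  and cod_lunit[simp]: "cd (lunit C A) = A"
  and iso_lunit: "is_iso C (lunit C A)"
  using sm unfolding is_symmetric_monoidal_def hom_def by auto

lemma dom_runit[simp]: "dm (runit C A) = A \<oplus> I"
  and cod_runit[simp]: "cd (runit C A) = A"
  using sm unfolding is_symmetric_monoidal_def hom_def by auto

lemma dom_braid[simp]: "dm (braid C A B) = A \<oplus> B"
  and cod_braid[simp]: "cd (braid C A B) = B \<oplus> A"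
  using sm unfolding is_symmetric_monoidal_def hom_def by auto

lemma nat_assoc: "assoc C (cd f1) (cd f2) (cd f3) \<cdot> ((f1 \<odot> f2) \<odot> f3)
        = (f1 \<odot> (f2 \<odot> f3)) \<cdot> assoc C (dm f1) (dm f2) (dm f3)"
  using sm unfolding is_symmetric_monoidal_def by metis

lemma nat_lunit: "lunit C (cd f) \<cdot> (ii I \<odot> f) = f \<cdot> lunit C (dm f)"
  using sm unfolding is_symmetric_monoidal_def by metis

lemma nat_runit: "runit C (cd f) \<cdot> (f \<odot> ii I) = f \<cdot> runit C (dm f)"
  using sm unfolding is_symmetric_monoidal_def by metis

lemma nat_braid: "braid C (cd f) (cd g) \<cdot> (f \<odot> g) = (g \<odot> f) \<cdot> braid C (dm f) (dm g)"
  using sm unfolding is_symmetric_monoidal_def by metis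

lemma triangle: "(ii A \<odot> lunit C B) \<cdot> assoc C A I B = runit C A \<odot> ii B"
  using sm unfolding is_symmetric_monoidal_def by metis

lemma braid_inv: "braid C B A \<cdot> braid C A B = ii (A \<oplus> B)"
  using sm unfolding is_symmetric_monoidal_def by metis

lemma dom_copy[simp]: "dm (mcopy C A) = A" and cod_copy[simp]: "cd (mcopy C A) = A \<oplus> A"
  and dom_del[simp]: "dm (mdel C A) = A" and cod_del[simp]: "cd (mdel C A) = I"
  using mk unfolding is_markov_category_def hom_def by auto

lemma counit_l: "lunit C A \<cdot> ((mdel C A \<odot> ii A) \<cdot> mcopy C A) = ii A"
  and counit_r: "runit C A \<cdot> ((ii A \<odot> mdel C A) \<cdot> mcopy C A) = ii A"
  and copy_comm: "braid C A A \<cdot> mcopy C A = mcopy C A"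
  using mk unfolding is_markov_category_def by auto

lemma copy_tens: "mcopy C (A \<oplus> B) =
        inv_arr C (assoc C A B (A \<oplus> B)) \<cdot>
         ((ii A \<odot> assoc C B A B) \<cdot>
          ((ii A \<odot> (braid C A B \<odot> ii B)) \<cdot>
           ((ii A \<odot> inv_arr C (assoc C A B B)) \<cdot>
            (assoc C A A (B \<oplus> B) \<cdot>
             (mcopy C A \<odot> mcopy C B)))))"
  using mk unfolding is_markov_category_def by metis

lemma terminal: "dm f = A \<Longrightarrow> cd f = I \<Longrightarrow> f = mdel C A"
  using mk unfolding is_markov_category_def hom_def by blast

lemma inv_props:
  assumes "is_iso C f"
  shows "dm (inv_arr C f) = cd f" "cd (inv_arr C f) = dm f"
    "inv_arr C f \<cdot> f = ii (dm f)" "f \<cdot> inv_arr C f = ii (cd f)"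
proof -
  have "\<exists>g. g \<in> hom C (cd f) (dm f) \<and> g \<cdot> f = ii (dm f) \<and> f \<cdot> g = ii (cd f)"
    using assms unfolding is_iso_def by blast
  hence "inv_arr C f \<in> hom C (cd f) (dm f) \<and> inv_arr C f \<cdot> f = ii (dm f) \<and> f \<cdot> inv_arr C f = ii (cd f)"
    unfolding inv_arr_def by (rule someI_ex)
  thus "dm (inv_arr C f) = cd f" "cd (inv_arr C f) = dm f"
    "inv_arr C f \<cdot> f = ii (dm f)" "f \<cdot> inv_arr C f = ii (cd f)" unfolding hom_def by auto
qed

lemma dom_ainv[simp]: "dm (inv_arr C (assoc C A B D)) = A \<oplus> (B \<oplus> D)"
  and cod_ainv[simp]: "cd (inv_arr C (assoc C A B D)) = (A \<oplus> B) \<oplus> D"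
  and ainv_l: "inv_arr C (assoc C A B D) \<cdot> assoc C A B D = ii ((A \<oplus> B) \<oplus> D)"
  and ainv_r: "assoc C A B D \<cdot> inv_arr C (assoc C A B D) = ii (A \<oplus> (B \<oplus> D))"
  using inv_props[OF iso_assoc, of A B D] by auto

lemma linv_l: "inv_arr C (lunit C A) \<cdot> lunit C A = ii (I \<oplus> A)"
  using inv_props[OF iso_lunit, of A] by auto

end

context MC begin

lemma kc: "a \<cdot> b = c \<cdot> d \<Longrightarrow> cd k = dm b \<Longrightarrow> cd k = dm d \<Longrightarrow> cd b = dm a \<Longrightarrow> cd d = dm c
   \<Longrightarrow> a \<cdot> (b \<cdot> k) = c \<cdot> (d \<cdot> k)"
  using assoc_r[of k b a] assoc_r[of k d c] by simp

lemma copy_k: "cd k = W \<Longrightarrow> braid C W W \<cdot> (mcopy C W \<cdot> k) = mcopy C W \<cdot> k"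
  using assoc_r[of k "mcopy C W" "braid C W W"] copy_comm[of W] by simp

lemma braid_inv_k: "cd k = A \<oplus> B \<Longrightarrow> braid C B A \<cdot> (braid C A B \<cdot> k) = k"
  using assoc_r[of k "braid C A B" "braid C B A"] braid_inv[of B A] by simp

lemma counit_r_k: "cd k = A \<Longrightarrow> runit C A \<cdot> ((ii A \<odot> mdel C A) \<cdot> (mcopy C A \<cdot> k)) = k"
  using assoc_r[of k "mcopy C A" "ii A \<odot> mdel C A"] assoc_r[of k "(ii A \<odot> mdel C A) \<cdot> mcopy C A" "runit C A"]
    counit_r[of A] by simp
lemma counit_l_k: "cd k = A \<Longrightarrow> lunit C A \<cdot> ((mdel C A \<odot> ii A) \<cdot> (mcopy C A \<cdot> k)) = k"
  using assoc_r[of k "mcopy C A" "mdel C A \<odot> ii A"] assoc_r[of k "(mdel C A \<odot> ii A) \<cdot> mcopy C A" "lunit C A"]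
    counit_l[of A] by simp

lemma swapcopy:
  assumes "cd u = Z" "dm u = W" "cd k = W"
  shows "(u \<odot> ii W) \<cdot> (mcopy C W \<cdot> k) = braid C W Z \<cdot> ((ii W \<odot> u) \<cdot> (mcopy C W \<cdot> k))"
proof -
  have n: "braid C Z W \<cdot> (u \<odot> ii W) = (ii W \<odot> u) \<cdot> braid C W W"
    using nat_braid[of u "ii W"] assms by simp
  have "(ii W \<odot> u) \<cdot> (mcopy C W \<cdot> k) = (ii W \<odot> u) \<cdot> (braid C W W \<cdot> (mcopy C W \<cdot> k))"
    using copy_k[of k W] assms by simp
  also have "\<dots> = braid C Z W \<cdot> ((u \<odot> ii W) \<cdot> (mcopy C W \<cdot> k))"
    by (rule kc[OF n[symmetric]]) (use assms in simp_all)
  finally have "braid C W Z \<cdot> ((ii W \<odot> u) \<cdot> (mcopy C W \<cdot> k)) = braid C W Z \<cdot> (braid C Z W \<cdot> ((u \<odot> ii W) \<cdot> (mcopy C W \<cdot> k)))"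
    by simp
  also have "\<dots> = (u \<odot> ii W) \<cdot> (mcopy C W \<cdot> k)"
    using assms by (simp add: braid_inv_k)
  finally show ?thesis by simp
qed

lemma part1:
  assumes p: "p \<in> hom C A X" and f: "f \<in> hom C X Y" and g: "g \<in> hom C X Y"
    and d: "dil_eq C p f g"
  shows "as_eq C p f g"
proof -
  have [simp]: "dm p = A" "cd p = X" "dm f = X" "cd f = Y" "dm g = X" "cd g = Y"
    using p f g unfolding hom_def by auto
  have dil: "dilation C p X (mcopy C X \<cdot> p)"
    unfolding dilation_def hom_def using counit_r_k[of p X] by simp
  have e: "(f \<odot> ii X) \<cdot> (mcopy C X \<cdot> p) = (g \<odot> ii X) \<cdot> (mcopy C X \<cdot> p)"
    using d dil unfolding dil_eq_def by blast
  have "(ii X \<odot> f) \<cdot> (mcopy C X \<cdot> p) = braid C Y X \<cdot> ((f \<odot> ii X) \<cdot> (mcopy C X \<cdot> p))"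
    using swapcopy[of f Y X p] by (simp add: braid_inv_k)
  also have "\<dots> = braid C Y X \<cdot> ((g \<odot> ii X) \<cdot> (mcopy C X \<cdot> p))" using e by simp
  also have "\<dots> = (ii X \<odot> g) \<cdot> (mcopy C X \<cdot> p)"
    using swapcopy[of g Y X p] by (simp add: braid_inv_k)
  finally show ?thesis unfolding as_eq_def by simp
qed

end

context MC begin

lemma kc1: "x \<cdot> y = z \<Longrightarrow> cd K = dm y \<Longrightarrow> cd y = dm x \<Longrightarrow> x \<cdot> (y \<cdot> K) = z \<cdot> K"
  using assoc_r[of K y x] by simp

lemma idtens_comp: "cd f = dm g \<Longrightarrow> ii A \<odot> (g \<cdot> f) = (ii A \<odot> g) \<cdot> (ii A \<odot> f)"
    using interchange[of "ii A" "ii A" f g] by simp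
lemma tensid_comp: "cd f = dm g \<Longrightarrow> (g \<cdot> f) \<odot> ii A = (g \<odot> ii A) \<cdot> (f \<odot> ii A)"
  using interchange[of f g "ii A" "ii A"] by simp

lemma dil2:
  assumes [simp]: "dm f = A" "cd f = W" "dm g = W" "cd g = X"
  shows "runit C X \<cdot> ((ii X \<odot> mdel C (X \<oplus> W)) \<cdot>
           (assoc C X X W \<cdot> (((mcopy C X \<cdot> g) \<odot> ii W) \<cdot> (mcopy C W \<cdot> f)))) = g \<cdot> f"
proof -
  have a: "mdel C (X \<oplus> W) = mdel C W \<cdot> (lunit C W \<cdot> (mdel C X \<odot> ii W))"
    by (rule terminal[symmetric]) simp_all
  have b: "(ii X \<odot> (mdel C X \<odot> ii W)) \<cdot> assoc C X X W = assoc C X I W \<cdot> ((ii X \<odot> mdel C X) \<odot> ii W)"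
    using nat_assoc[of "ii X" "mdel C X" "ii W"] by simp
  have c: "(ii X \<odot> lunit C W) \<cdot> assoc C X I W = runit C X \<odot> ii W" by (rule triangle)
  let ?K = "((mcopy C X \<cdot> g) \<odot> ii W) \<cdot> (mcopy C W \<cdot> f)"
  have "runit C X \<cdot> ((ii X \<odot> mdel C (X \<oplus> W)) \<cdot> (assoc C X X W \<cdot> ?K))
     = runit C X \<cdot> ((ii X \<odot> mdel C W) \<cdot> ((ii X \<odot> lunit C W) \<cdot> ((ii X \<odot> (mdel C X \<odot> ii W)) \<cdot> (assoc C X X W \<cdot> ?K))))"
    by (simp add: a idtens_comp)
  also have "\<dots> = runit C X \<cdot> ((ii X \<odot> mdel C W) \<cdot> ((ii X \<odot> lunit C W) \<cdot> (assoc C X I W \<cdot> (((ii X \<odot> mdel C X) \<odot> ii W) \<cdot> ?K))))"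
    by (subst kc1[OF b]) simp_all
  also have "\<dots> = runit C X \<cdot> ((ii X \<odot> mdel C W) \<cdot> ((runit C X \<odot> ii W) \<cdot> (((ii X \<odot> mdel C X) \<odot> ii W) \<cdot> ?K)))"
    by (subst kc1[OF c]) simp_all
  also have "\<dots> = runit C X \<cdot> ((ii X \<odot> mdel C W) \<cdot> ((runit C X \<cdot> ((ii X \<odot> mdel C X) \<cdot> (mcopy C X \<cdot> g))) \<odot> ii W) \<cdot> (mcopy C W \<cdot> f))"
    by (simp add: tensid_comp)
  also have "\<dots> = runit C X \<cdot> ((ii X \<odot> mdel C W) \<cdot> (g \<odot> ii W) \<cdot> (mcopy C W \<cdot> f))"
    by (simp add: counit_r_k)
  also have "\<dots> = runit C X \<cdot> ((g \<odot> ii I) \<cdot> (ii W \<odot> mdel C W) \<cdot> (mcopy C W \<cdot> f))"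
  proof -
    have e: "(ii X \<odot> mdel C W) \<cdot> (g \<odot> ii W) = (g \<odot> ii I) \<cdot> (ii W \<odot> mdel C W)"
      using interchange[of g "ii X" "ii W" "mdel C W"] interchange[of "ii W" g "mdel C W" "ii I"] by simp
    show ?thesis by (subst kc[OF e]) simp_all
  qed
  also have "\<dots>
     = g \<cdot> (runit C W \<cdot> ((ii W \<odot> mdel C W) \<cdot> (mcopy C W \<cdot> f)))"
    using nat_runit[of g] by (subst kc1[where z="g \<cdot> runit C W"]) simp_all
  also have "\<dots> = g \<cdot> f" by (simp add: counit_r_k)
  finally show ?thesis .
qed


lemma canc_assoc:
  assumes "cd x = (A \<oplus> B) \<oplus> D" "cd y = (A \<oplus> B) \<oplus> D" "assoc C A B D \<cdot> x = assoc C A B D \<cdot> y"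
  shows "x = y"
proof -
  have "inv_arr C (assoc C A B D) \<cdot> (assoc C A B D \<cdot> x) = inv_arr C (assoc C A B D) \<cdot> (assoc C A B D \<cdot> y)"
    using assms(3) by simp
  thus ?thesis using assms(1,2) by (simp add: kc1[OF ainv_l])
qed

lemma canc_braid:
  assumes "cd x = A \<oplus> B" "cd y = A \<oplus> B" "braid C A B \<cdot> x = braid C A B \<cdot> y"
  shows "x = y"
proof -
  have "braid C B A \<cdot> (braid C A B \<cdot> x) = braid C B A \<cdot> (braid C A B \<cdot> y)"
    using assms(3) by simp
  thus ?thesis using assms(1,2) by (simp add: braid_inv_k)
qed

lemma canc_idbraid:
  assumes "cd x = W \<oplus> (A \<oplus> B)" "cd y = W \<oplus> (A \<oplus> B)"
    "(ii W \<odot> braid C A B) \<cdot> x = (ii W \<odot> braid C A B) \<cdot> y"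
  shows "x = y"
proof -
  have e: "(ii W \<odot> braid C B A) \<cdot> (ii W \<odot> braid C A B) = ii (W \<oplus> (A \<oplus> B))"
    using idtens_comp[of "braid C A B" "braid C B A" W] braid_inv[of B A] by simp
  have "(ii W \<odot> braid C B A) \<cdot> ((ii W \<odot> braid C A B) \<cdot> x) = (ii W \<odot> braid C B A) \<cdot> ((ii W \<odot> braid C A B) \<cdot> y)"
    using assms(3) by simp
  thus ?thesis using assms(1,2) by (simp add: kc1[OF e])
qed

lemma rearr:
  assumes [simp]: "dm f = A" "cd f = W" "dm g = W" "cd g = X" "dm h = X" "cd h = Y"
  shows "(h \<odot> ii (X \<oplus> W)) \<cdot> (assoc C X X W \<cdot> (((mcopy C X \<cdot> g) \<odot> ii W) \<cdot> (mcopy C W \<cdot> f)))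
    = assoc C Y X W \<cdot> (braid C W (Y \<oplus> X) \<cdot> ((ii W \<odot> braid C X Y) \<cdot>
        ((ii W \<odot> ((ii X \<odot> h) \<cdot> (mcopy C X \<cdot> g))) \<cdot> (mcopy C W \<cdot> f))))"
proof -
  let ?v = "(ii X \<odot> h) \<cdot> (mcopy C X \<cdot> g)"
  have 1: "(h \<odot> ii (X \<oplus> W)) \<cdot> assoc C X X W = assoc C Y X W \<cdot> ((h \<odot> ii X) \<odot> ii W)"
    using nat_assoc[of h "ii X" "ii W"] by simp
  have 3: "(h \<odot> ii X) \<cdot> (mcopy C X \<cdot> g) = braid C X Y \<cdot> ?v"
    using swapcopy[of h Y X g] by simp
  have 5: "(?v \<odot> ii W) \<cdot> (mcopy C W \<cdot> f) = braid C W (X \<oplus> Y) \<cdot> ((ii W \<odot> ?v) \<cdot> (mcopy C W \<cdot> f))"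
    using swapcopy[of ?v "X \<oplus> Y" W f] by simp
  have 6: "(braid C X Y \<odot> ii W) \<cdot> braid C W (X \<oplus> Y) = braid C W (Y \<oplus> X) \<cdot> (ii W \<odot> braid C X Y)"
    using nat_braid[of "ii W" "braid C X Y"] by simp
  have "(h \<odot> ii (X \<oplus> W)) \<cdot> (assoc C X X W \<cdot> (((mcopy C X \<cdot> g) \<odot> ii W) \<cdot> (mcopy C W \<cdot> f)))
      = assoc C Y X W \<cdot> (((h \<odot> ii X) \<odot> ii W) \<cdot> (((mcopy C X \<cdot> g) \<odot> ii W) \<cdot> (mcopy C W \<cdot> f)))"
    by (subst kc1[OF 1]) simp_all
  also have "\<dots> = assoc C Y X W \<cdot> (((h \<odot> ii X) \<cdot> (mcopy C X \<cdot> g)) \<odot> ii W) \<cdot> (mcopy C W \<cdot> f)"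
    by (simp add: tensid_comp)
  also have "\<dots> = assoc C Y X W \<cdot> ((braid C X Y \<odot> ii W) \<cdot> ((?v \<odot> ii W) \<cdot> (mcopy C W \<cdot> f)))"
    unfolding 3 by (simp add: tensid_comp)
  also have "\<dots> = assoc C Y X W \<cdot> ((braid C X Y \<odot> ii W) \<cdot> (braid C W (X \<oplus> Y) \<cdot> ((ii W \<odot> ?v) \<cdot> (mcopy C W \<cdot> f))))"
    unfolding 5 ..
  also have "\<dots> = assoc C Y X W \<cdot> (braid C W (Y \<oplus> X) \<cdot> ((ii W \<odot> braid C X Y) \<cdot> ((ii W \<odot> ?v) \<cdot> (mcopy C W \<cdot> f))))"
    by (subst kc[OF 6]) simp_all
  finally show ?thesis .
qed

lemma part2b:
  assumes H: "\<forall>A X Y p f g. p \<in> hom C A X \<and> f \<in> hom C X Y \<and> g \<in> hom C X Y \<and>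
            as_eq C p f g \<longrightarrow> dil_eq C p f g"
  shows "causal C"
  unfolding causal_def
proof (intro allI impI, elim conjE)
  fix A W X Y f g h1 h2
  assume f: "f \<in> hom C A W" and g: "g \<in> hom C W X" and h1: "h1 \<in> hom C X Y" and h2: "h2 \<in> hom C X Y"
    and e: "(ii X \<odot> h1) \<cdot> (mcopy C X \<cdot> (g \<cdot> f)) = (ii X \<odot> h2) \<cdot> (mcopy C X \<cdot> (g \<cdot> f))"
  have [simp]: "dm f = A" "cd f = W" "dm g = W" "cd g = X" "dm h1 = X" "cd h1 = Y" "dm h2 = X" "cd h2 = Y"
    using f g h1 h2 unfolding hom_def by auto
  have p: "g \<cdot> f \<in> hom C A X" unfolding hom_def by simp
  have "as_eq C (g \<cdot> f) h1 h2" unfolding as_eq_def using e by simp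
  hence de: "dil_eq C (g \<cdot> f) h1 h2" using H p h1 h2 by blast
  let ?pi = "assoc C X X W \<cdot> (((mcopy C X \<cdot> g) \<odot> ii W) \<cdot> (mcopy C W \<cdot> f))"
  have "dilation C (g \<cdot> f) (X \<oplus> W) ?pi"
    unfolding dilation_def hom_def using dil2[of f A W g X] by simp
  hence "(h1 \<odot> ii (X \<oplus> W)) \<cdot> ?pi = (h2 \<odot> ii (X \<oplus> W)) \<cdot> ?pi"
    using de unfolding dil_eq_def by blast
  hence q: "assoc C Y X W \<cdot> (braid C W (Y \<oplus> X) \<cdot> ((ii W \<odot> braid C X Y) \<cdot>
        ((ii W \<odot> ((ii X \<odot> h1) \<cdot> (mcopy C X \<cdot> g))) \<cdot> (mcopy C W \<cdot> f))))
   = assoc C Y X W \<cdot> (braid C W (Y \<oplus> X) \<cdot> ((ii W \<odot> braid C X Y) \<cdot>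
        ((ii W \<odot> ((ii X \<odot> h2) \<cdot> (mcopy C X \<cdot> g))) \<cdot> (mcopy C W \<cdot> f))))"
    by (simp only: rearr[of f A W g X h1 Y, simplified] rearr[of f A W g X h2 Y, simplified])
  show "(ii W \<odot> ((ii X \<odot> h1) \<cdot> (mcopy C X \<cdot> g))) \<cdot> (mcopy C W \<cdot> f) =
        (ii W \<odot> ((ii X \<odot> h2) \<cdot> (mcopy C X \<cdot> g))) \<cdot> (mcopy C W \<cdot> f)"
    apply (rule canc_idbraid[of _ W X Y])
      apply simp
     apply simp
    apply (rule canc_braid[of _ W "Y \<oplus> X"])
      apply simp
     apply simp
    apply (rule canc_assoc[of _ Y X W])
      apply simp
     apply simp
    by (rule q)
qed

end

context MC begin

lemma braidII: "braid C I I = ii (I \<oplus> I)"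
proof -
  have a: "lunit C I \<cdot> braid C I I = lunit C I"
    using terminal[of "lunit C I \<cdot> braid C I I" "I \<oplus> I"] terminal[of "lunit C I" "I \<oplus> I"] by simp
  have li: "dm (inv_arr C (lunit C I)) = I" "cd (inv_arr C (lunit C I)) = I \<oplus> I"
    using inv_props[OF iso_lunit, of I] by auto
  have "braid C I I = inv_arr C (lunit C I) \<cdot> (lunit C I \<cdot> braid C I I)"
    using li kc1[OF linv_l[of I], of "braid C I I"] by simp
  also have "\<dots> = ii (I \<oplus> I)" unfolding a using linv_l[of I] by simp
  finally show ?thesis .
qed

lemma nat_ainv: "((f1 \<odot> f2) \<odot> f3) \<cdot> inv_arr C (assoc C (dm f1) (dm f2) (dm f3))
   = inv_arr C (assoc C (cd f1) (cd f2) (cd f3)) \<cdot> (f1 \<odot> (f2 \<odot> f3))"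
proof -
  let ?a = "assoc C (dm f1) (dm f2) (dm f3)" and ?b = "assoc C (cd f1) (cd f2) (cd f3)"
  let ?ai = "inv_arr C ?a" and ?bi = "inv_arr C ?b"
  let ?F = "(f1 \<odot> f2) \<odot> f3" and ?G = "f1 \<odot> (f2 \<odot> f3)"
  have n: "?b \<cdot> ?F = ?G \<cdot> ?a" by (rule nat_assoc)
  have "?F \<cdot> ?ai = ?bi \<cdot> (?b \<cdot> (?F \<cdot> ?ai))"
    using kc1[OF ainv_l[of "cd f1" "cd f2" "cd f3"], of "?F \<cdot> ?ai"] by simp
  also have "\<dots> = ?bi \<cdot> (?G \<cdot> (?a \<cdot> ?ai))"
    by (subst kc[OF n]) simp_all
  also have "\<dots> = ?bi \<cdot> ?G" by (simp add: ainv_r)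
  finally show ?thesis .
qed

lemma projP:
  "((runit C X \<cdot> (ii X \<odot> mdel C E)) \<odot> (lunit C E \<cdot> (mdel C X \<odot> ii E))) \<cdot> mcopy C (X \<oplus> E) = ii (X \<oplus> E)"
proof -
  let ?RL = "runit C X \<odot> lunit C E"
  let ?T0 = "(ii X \<odot> mdel C E) \<odot> (mdel C X \<odot> ii E)"
  let ?a1 = "inv_arr C (assoc C X E (X \<oplus> E))"
  let ?a1' = "inv_arr C (assoc C X I (I \<oplus> E))"
  let ?iA = "ii X \<odot> assoc C E X E"
  let ?iB = "ii X \<odot> (braid C X E \<odot> ii E)"
  let ?iC = "ii X \<odot> inv_arr C (assoc C X E E)"
  let ?a5 = "assoc C X X (E \<oplus> E)"
  let ?CC = "mcopy C X \<odot> mcopy C E"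
  let ?D1 = "ii X \<odot> (mdel C E \<odot> (mdel C X \<odot> ii E))"
  let ?D2 = "ii X \<odot> ((mdel C E \<odot> mdel C X) \<odot> ii E)"
  let ?D3 = "ii X \<odot> ((mdel C X \<odot> mdel C E) \<odot> ii E)"
  let ?D4 = "ii X \<odot> (mdel C X \<odot> (mdel C E \<odot> ii E))"
  let ?D5 = "(ii X \<odot> mdel C X) \<odot> (mdel C E \<odot> ii E)"
  have S1: "?T0 \<cdot> ?a1 = ?a1' \<cdot> ?D1"
    using nat_ainv[of "ii X" "mdel C E" "mdel C X \<odot> ii E"] by simp
  have S2: "?D1 \<cdot> ?iA = (ii X \<odot> assoc C I I E) \<cdot> ?D2"
  proof -
    have "?D1 \<cdot> ?iA = ii X \<odot> ((mdel C E \<odot> (mdel C X \<odot> ii E)) \<cdot> assoc C E X E)"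
      by (simp add: idtens_comp)
    also have "\<dots> = ii X \<odot> (assoc C I I E \<cdot> ((mdel C E \<odot> mdel C X) \<odot> ii E))"
      using nat_assoc[of "mdel C E" "mdel C X" "ii E"] by simp
    also have "\<dots> = (ii X \<odot> assoc C I I E) \<cdot> ?D2" by (simp add: idtens_comp)
    finally show ?thesis .
  qed
  have S3: "?D2 \<cdot> ?iB = ?D3"
  proof -
    have "?D2 \<cdot> ?iB = ii X \<odot> (((mdel C E \<odot> mdel C X) \<cdot> braid C X E) \<odot> ii E)"
      by (simp add: idtens_comp tensid_comp)
    also have "\<dots> = ii X \<odot> ((braid C I I \<cdot> (mdel C X \<odot> mdel C E)) \<odot> ii E)"
      using nat_braid[of "mdel C X" "mdel C E"] by simp
    also have "\<dots> = ?D3" by (simp add: braidII)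
    finally show ?thesis .
  qed
  have S4: "?D3 \<cdot> ?iC = (ii X \<odot> inv_arr C (assoc C I I E)) \<cdot> ?D4"
  proof -
    have "?D3 \<cdot> ?iC = ii X \<odot> (((mdel C X \<odot> mdel C E) \<odot> ii E) \<cdot> inv_arr C (assoc C X E E))"
      by (simp add: idtens_comp)
    also have "\<dots> = ii X \<odot> (inv_arr C (assoc C I I E) \<cdot> (mdel C X \<odot> (mdel C E \<odot> ii E)))"
      using nat_ainv[of "mdel C X" "mdel C E" "ii E"] by simp
    also have "\<dots> = (ii X \<odot> inv_arr C (assoc C I I E)) \<cdot> ?D4" by (simp add: idtens_comp)
    finally show ?thesis .
  qed
  have S5: "?D4 \<cdot> ?a5 = assoc C X I (I \<oplus> E) \<cdot> ?D5"
    using nat_assoc[of "ii X" "mdel C X" "mdel C E \<odot> ii E"] by simp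
  have c1: "(ii X \<odot> assoc C I I E) \<cdot> (ii X \<odot> inv_arr C (assoc C I I E)) = ii (X \<oplus> (I \<oplus> (I \<oplus> E)))"
    using idtens_comp[of "inv_arr C (assoc C I I E)" "assoc C I I E" X] by (simp add: ainv_r)
  have c2: "?a1' \<cdot> assoc C X I (I \<oplus> E) = ii ((X \<oplus> I) \<oplus> (I \<oplus> E))" by (rule ainv_l)
  have fin: "?RL \<cdot> (?D5 \<cdot> ?CC) = ii (X \<oplus> E)"
  proof -
    have "?RL \<cdot> (?D5 \<cdot> ?CC) = ?RL \<cdot> (((ii X \<odot> mdel C X) \<cdot> mcopy C X) \<odot> ((mdel C E \<odot> ii E) \<cdot> mcopy C E))"
      using interchange[of "mcopy C X" "ii X \<odot> mdel C X" "mcopy C E" "mdel C E \<odot> ii E"] by simp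
    also have "\<dots> = (runit C X \<cdot> ((ii X \<odot> mdel C X) \<cdot> mcopy C X)) \<odot> (lunit C E \<cdot> ((mdel C E \<odot> ii E) \<cdot> mcopy C E))"
      using interchange[of "(ii X \<odot> mdel C X) \<cdot> mcopy C X" "runit C X" "(mdel C E \<odot> ii E) \<cdot> mcopy C E" "lunit C E"] by simp
    also have "\<dots> = ii (X \<oplus> E)" by (simp add: counit_l counit_r)
    finally show ?thesis .
  qed
  have "((runit C X \<cdot> (ii X \<odot> mdel C E)) \<odot> (lunit C E \<cdot> (mdel C X \<odot> ii E))) \<cdot> mcopy C (X \<oplus> E)
      = ?RL \<cdot> (?T0 \<cdot> (?a1 \<cdot> (?iA \<cdot> (?iB \<cdot> (?iC \<cdot> (?a5 \<cdot> ?CC))))))"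
    unfolding copy_tens using interchange[of "ii X \<odot> mdel C E" "runit C X" "mdel C X \<odot> ii E" "lunit C E"] by simp
  also have "\<dots> = ?RL \<cdot> (?a1' \<cdot> (?D1 \<cdot> (?iA \<cdot> (?iB \<cdot> (?iC \<cdot> (?a5 \<cdot> ?CC))))))"
    by (subst kc[OF S1]) simp_all
  also have "\<dots> = ?RL \<cdot> (?a1' \<cdot> ((ii X \<odot> assoc C I I E) \<cdot> (?D2 \<cdot> (?iB \<cdot> (?iC \<cdot> (?a5 \<cdot> ?CC))))))"
    by (subst kc[OF S2]) simp_all
  also have "\<dots> = ?RL \<cdot> (?a1' \<cdot> ((ii X \<odot> assoc C I I E) \<cdot> (?D3 \<cdot> (?iC \<cdot> (?a5 \<cdot> ?CC)))))"
    by (subst kc1[OF S3]) simp_all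
  also have "\<dots> = ?RL \<cdot> (?a1' \<cdot> ((ii X \<odot> assoc C I I E) \<cdot> ((ii X \<odot> inv_arr C (assoc C I I E)) \<cdot> (?D4 \<cdot> (?a5 \<cdot> ?CC)))))"
    by (subst kc[OF S4]) simp_all
  also have "\<dots> = ?RL \<cdot> (?a1' \<cdot> (?D4 \<cdot> (?a5 \<cdot> ?CC)))"
    by (subst kc1[OF c1]) simp_all
  also have "\<dots> = ?RL \<cdot> (?a1' \<cdot> (assoc C X I (I \<oplus> E) \<cdot> (?D5 \<cdot> ?CC)))"
    by (subst kc[OF S5]) simp_all
  also have "\<dots> = ?RL \<cdot> (?D5 \<cdot> ?CC)"
    by (subst kc1[OF c2]) simp_all
  also have "\<dots> = ii (X \<oplus> E)" by (rule fin)
  finally show ?thesis .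
qed


lemma claim2a:
  assumes [simp]: "dm pi = A" "cd pi = X \<oplus> E" "dm h = X" "cd h = Y"
  shows "((lunit C E \<cdot> (mdel C X \<odot> ii E)) \<odot> (lunit C Y \<cdot> (mdel C X \<odot> ii Y))) \<cdot>
     ((ii (X \<oplus> E) \<odot> ((ii X \<odot> h) \<cdot> (mcopy C X \<cdot> (runit C X \<cdot> (ii X \<odot> mdel C E))))) \<cdot> (mcopy C (X \<oplus> E) \<cdot> pi))
    = braid C Y E \<cdot> ((h \<odot> ii E) \<cdot> pi)"
proof -
  let ?PX = "runit C X \<cdot> (ii X \<odot> mdel C E)" and ?PE = "lunit C E \<cdot> (mdel C X \<odot> ii E)"
  let ?r = "lunit C Y \<cdot> (mdel C X \<odot> ii Y)" and ?W = "X \<oplus> E"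
  have a: "?r \<cdot> ((ii X \<odot> h) \<cdot> (mcopy C X \<cdot> ?PX)) = h \<cdot> ?PX"
  proof -
    have e1: "(mdel C X \<odot> ii Y) \<cdot> (ii X \<odot> h) = (ii I \<odot> h) \<cdot> (mdel C X \<odot> ii X)"
      using interchange[of "ii X" "mdel C X" h "ii Y"] interchange[of "mdel C X" "ii I" "ii X" h] by simp
    have e2: "lunit C Y \<cdot> (ii I \<odot> h) = h \<cdot> lunit C X" using nat_lunit[of h] by simp
    have "?r \<cdot> ((ii X \<odot> h) \<cdot> (mcopy C X \<cdot> ?PX)) = lunit C Y \<cdot> ((ii I \<odot> h) \<cdot> ((mdel C X \<odot> ii X) \<cdot> (mcopy C X \<cdot> ?PX)))"
      by (subst kc[OF e1, symmetric]) simp_all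
    also have "\<dots> = h \<cdot> (lunit C X \<cdot> ((mdel C X \<odot> ii X) \<cdot> (mcopy C X \<cdot> ?PX)))"
      by (subst kc[OF e2]) simp_all
    also have "\<dots> = h \<cdot> ?PX" by (simp add: counit_l_k)
    finally show ?thesis .
  qed
  have d: "(?PE \<odot> ?PX) \<cdot> (mcopy C ?W \<cdot> pi) = braid C X E \<cdot> pi"
  proof -
    have n: "braid C X E \<cdot> (?PX \<odot> ?PE) = (?PE \<odot> ?PX) \<cdot> braid C ?W ?W"
      using nat_braid[of ?PX ?PE] by simp
    have "(?PE \<odot> ?PX) \<cdot> (mcopy C ?W \<cdot> pi) = (?PE \<odot> ?PX) \<cdot> (braid C ?W ?W \<cdot> (mcopy C ?W \<cdot> pi))"
      using copy_k[of pi ?W] by simp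
    also have "\<dots> = braid C X E \<cdot> ((?PX \<odot> ?PE) \<cdot> (mcopy C ?W \<cdot> pi))"
      by (subst kc[OF n]) simp_all
    also have "\<dots> = braid C X E \<cdot> pi"
      by (subst kc1[OF projP]) simp_all
    finally show ?thesis .
  qed
  have e: "(ii E \<odot> h) \<cdot> braid C X E = braid C Y E \<cdot> (h \<odot> ii E)"
    using nat_braid[of h "ii E"] by simp
  have "(?PE \<odot> ?r) \<cdot> ((ii ?W \<odot> ((ii X \<odot> h) \<cdot> (mcopy C X \<cdot> ?PX))) \<cdot> (mcopy C ?W \<cdot> pi))
     = ((?PE \<cdot> ii ?W) \<odot> (?r \<cdot> ((ii X \<odot> h) \<cdot> (mcopy C X \<cdot> ?PX)))) \<cdot> (mcopy C ?W \<cdot> pi)"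
    using interchange[of "ii ?W" ?PE "(ii X \<odot> h) \<cdot> (mcopy C X \<cdot> ?PX)" ?r] by simp
  also have "\<dots> = (?PE \<odot> (h \<cdot> ?PX)) \<cdot> (mcopy C ?W \<cdot> pi)" using a by simp
  also have "\<dots> = (ii E \<odot> h) \<cdot> ((?PE \<odot> ?PX) \<cdot> (mcopy C ?W \<cdot> pi))"
    using interchange[of ?PE "ii E" ?PX h] by simp
  also have "\<dots> = (ii E \<odot> h) \<cdot> (braid C X E \<cdot> pi)" unfolding d ..
  also have "\<dots> = braid C Y E \<cdot> ((h \<odot> ii E) \<cdot> pi)"
    by (subst kc[OF e]) simp_all
  finally show ?thesis .
qed

lemma part2a:
  assumes cs: "causal C" and p: "p \<in> hom C A X" and f: "f \<in> hom C X Y" and g: "g \<in> hom C X Y"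
    and ae: "as_eq C p f g"
  shows "dil_eq C p f g"
  unfolding dil_eq_def
proof (intro allI impI)
  fix E pi assume dl: "dilation C p E pi"
  have [simp]: "dm p = A" "cd p = X" "dm f = X" "cd f = Y" "dm g = X" "cd g = Y"
    using p f g unfolding hom_def by auto
  have [simp]: "dm pi = A" "cd pi = X \<oplus> E" using dl unfolding dilation_def hom_def by auto
  let ?PX = "runit C X \<cdot> (ii X \<odot> mdel C E)"
  have pp: "?PX \<cdot> pi = p" using dl unfolding dilation_def by simp
  have hyp: "(ii X \<odot> f) \<cdot> (mcopy C X \<cdot> (?PX \<cdot> pi)) = (ii X \<odot> g) \<cdot> (mcopy C X \<cdot> (?PX \<cdot> pi))"
    using ae unfolding pp as_eq_def by simp
  have "pi \<in> hom C A (X \<oplus> E)" "?PX \<in> hom C (X \<oplus> E) X" "f \<in> hom C X Y" "g \<in> hom C X Y"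
    using f g unfolding hom_def by auto
  hence K: "(ii (X \<oplus> E) \<odot> ((ii X \<odot> f) \<cdot> (mcopy C X \<cdot> ?PX))) \<cdot> (mcopy C (X \<oplus> E) \<cdot> pi)
        = (ii (X \<oplus> E) \<odot> ((ii X \<odot> g) \<cdot> (mcopy C X \<cdot> ?PX))) \<cdot> (mcopy C (X \<oplus> E) \<cdot> pi)"
    using cs hyp unfolding causal_def by blast
  have "braid C Y E \<cdot> ((f \<odot> ii E) \<cdot> pi) = braid C Y E \<cdot> ((g \<odot> ii E) \<cdot> pi)"
    using claim2a[of pi A X E f Y] claim2a[of pi A X E g Y] K by simp
  hence "braid C E Y \<cdot> (braid C Y E \<cdot> ((f \<odot> ii E) \<cdot> pi)) = braid C E Y \<cdot> (braid C Y E \<cdot> ((g \<odot> ii E) \<cdot> pi))"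
    by simp
  thus "(f \<odot> ii E) \<cdot> pi = (g \<odot> ii E) \<cdot> pi" by (simp add: braid_inv_k)
qed

end
theorem proposition4p3:
  fixes C :: "('o, 'm) mcat"
  assumes "is_markov_category C"
  shows "(\<forall>A X Y p f g. p \<in> hom C A X \<and> f \<in> hom C X Y \<and> g \<in> hom C X Y \<and>
            dil_eq C p f g \<longrightarrow> as_eq C p f g)
       \<and> ((\<forall>A X Y p f g. p \<in> hom C A X \<and> f \<in> hom C X Y \<and> g \<in> hom C X Y \<and>
            as_eq C p f g \<longrightarrow> dil_eq C p f g) \<longleftrightarrow> causal C)"
proof -
  interpret MC C by standard (rule assms)
  show ?thesis using part1 part2a part2b by blast
qed
end
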